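(* Let $m\geqslant3$, $\alpha=2\uparrow\uparrow(m-1)$, and let $n$ be a natural number with $n<3^\alpha$. Then $H(n)=m$ if and only if $n=2^\alpha a$ with $a$ odd and $a<1.5^\alpha$. Moreover, if $n$ is not of the form $2^\alpha a$ with $a$ odd, then $H(n)\leqslant m-1$.
   Context: $H(n)$ is the height of the factorization tree of $n\geqslant1$: $H(1)=0$ and, for $n=p_1^{\alpha_1}\cdots p_k^{\alpha_k}>1$ with distinct primes $p_i$, $H(n)=1+\max_i H(\alpha_i)$. Tetration: $a\uparrow\uparrow0=1$, $a\uparrow\uparrow b=a^{a\uparrow\uparrow(b-1)}$. *)

theory Defs
  imports "HOL-Computational_Algebra.Primes" Complex_Main
begin

fun tet :: "nat \<Rightarrow> nat \<Rightarrow> nat" where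
  "tet a 0 = 1"
| "tet a (Suc b) = a ^ (tet a b)"

lemma multiplicity_less_self:
  assumes "prime (p::nat)" "n > 1"
  shows "multiplicity p n < n"
proof -
  have "p ^ multiplicity p n dvd n" by (rule multiplicity_dvd)
  hence "p ^ multiplicity p n \<le> n" using assms(2) by (intro dvd_imp_le) auto
  moreover have "multiplicity p n < 2 ^ multiplicity p n" by (rule less_exp)
  moreover have "2 ^ multiplicity p n \<le> p ^ multiplicity p n"
    using prime_ge_2_nat[OF assms(1)] by (intro power_mono) auto
  ultimately show ?thesis by linarith
qed

text \<open>Height of the factorization tree.\<close>
function H :: "nat \<Rightarrow> nat" where
  "H n = (if n \<le> 1 then 0
          else 1 + Max ((\<lambda>p. H (multiplicity p n)) ` prime_factors n))"
  by auto
termination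
  by (relation "measure id") (auto intro: multiplicity_less_self)

declare H.simps[simp del]

end

theory Submission
  imports Defs
begin




lemma H_unfold: "(n::nat) > 1 \<Longrightarrow> H n = 1 + Max ((\<lambda>p. H (multiplicity p n)) ` prime_factors n)"
  by (subst H.simps) simp

lemma H_small: "(n::nat) \<le> 1 \<Longrightarrow> H n = 0"
  by (subst H.simps) simp

lemma H_ge_factor:
  assumes "(n::nat) > 1" "p \<in> prime_factors n"
  shows "H n \<ge> 1 + H (multiplicity p n)"
proof -
  have "H (multiplicity p n) \<le> Max ((\<lambda>p. H (multiplicity p n)) ` prime_factors n)"
    using assms(2) by (intro Max_ge) auto
  thus ?thesis using H_unfold[OF assms(1)] by simp
qed

lemma H_ge_Suc:
  assumes "H (n::nat) \<ge> Suc k"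
  shows "n > 1 \<and> (\<exists>p\<in>prime_factors n. H (multiplicity p n) \<ge> k)"
proof -
  have n1: "n > 1"
  proof (rule ccontr)
    assume "\<not> n > 1" hence "H n = 0" by (simp add: H_small)
    with assms show False by simp
  qed
  obtain p0 where p0: "prime p0" "p0 dvd n" using n1 prime_factor_nat[of n] by auto
  have "p0 \<in> prime_factors n" using p0 n1 by (simp add: in_prime_factors_iff)
  hence ne: "prime_factors n \<noteq> {}" by blast
  have "k \<le> Max ((\<lambda>p. H (multiplicity p n)) ` prime_factors n)"
    using assms H_unfold[OF n1] by simp
  hence "\<exists>x\<in>(\<lambda>p. H (multiplicity p n)) ` prime_factors n. k \<le> x"
    using ne by (subst (asm) Max_ge_iff) auto
  thus ?thesis using n1 by auto
qed

lemma H_bound0: "H (n::nat) \<ge> Suc k \<Longrightarrow> n \<ge> tet 2 (Suc k)"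
proof (induction k arbitrary: n)
  case 0
  then show ?case using H_ge_Suc[OF 0] by simp
next
  case (Suc k)
  from H_ge_Suc[OF Suc.prems] obtain p where n1: "n > 1" and p: "p \<in> prime_factors n"
    and h: "H (multiplicity p n) \<ge> Suc k" by blast
  have pp: "prime p" using p by auto
  have t: "tet 2 (Suc k) \<le> multiplicity p n" using Suc.IH h by blast
  have "2 ^ tet 2 (Suc k) \<le> p ^ tet 2 (Suc k)"
    using prime_ge_2_nat[OF pp] by (intro power_mono) auto
  also have "\<dots> \<le> p ^ multiplicity p n"
    using t prime_gt_0_nat[OF pp] by (intro power_increasing) auto
  also have "\<dots> \<le> n" using n1 by (intro dvd_imp_le multiplicity_dvd) auto
  finally show ?case by simp
qed

lemma H_bound: "H (n::nat) \<ge> k \<Longrightarrow> k \<ge> 1 \<Longrightarrow> n \<ge> tet 2 k"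
  using H_bound0[of "k - 1" n] by simp

lemma H_pow2: "k \<ge> 1 \<Longrightarrow> H (2 ^ k) = 1 + H k"
proof -
  assume k: "k \<ge> 1"
  have "(2::nat) ^ 1 \<le> 2 ^ k" by (rule power_increasing) (use k in auto)
  hence g: "(2::nat) ^ k > 1" by simp
  have pf: "prime_factors ((2::nat) ^ k) = {2}"
  proof (intro equalityI subsetI)
    fix x assume "x \<in> prime_factors ((2::nat) ^ k)"
    hence "prime x" "x dvd 2 ^ k" by (auto simp: in_prime_factors_iff)
    hence "x dvd 2" using prime_dvd_power by blast
    thus "x \<in> {2}" using \<open>prime x\<close> by (simp add: primes_dvd_imp_eq)
  next
    fix x assume "x \<in> {2::nat}"
    thus "x \<in> prime_factors (2 ^ k)" using k by (auto simp: in_prime_factors_iff)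
  qed
  show ?thesis using H_unfold[OF g] pf by (simp add: multiplicity_prime_power)
qed

lemma H_tet: "H (tet 2 j) = j"
proof (induction j)
  case 0
  then show ?case by (simp add: H_small)
next
  case (Suc j)
  have "tet 2 j \<ge> 1" by (cases j) auto
  then show ?case using Suc by (simp add: H_pow2)
qed

lemma tet_pos: "tet 2 j \<ge> 1"
  by (cases j) auto

lemma tet_ge: "j \<ge> 1 \<Longrightarrow> tet 2 j \<ge> 2"
proof (cases j)
  case (Suc i)
  have "(2::nat) ^ 1 \<le> 2 ^ tet 2 i" by (rule power_increasing) (use tet_pos in auto)
  then show ?thesis using Suc by simp
qed simp

lemma pow3: "(b::nat) \<ge> 2 \<Longrightarrow> 2 * 2 ^ b < (3::nat) ^ b"
proof (induction b rule: nat_induct_at_least)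
  case base then show ?case by simp
next
  case (Suc n) then show ?case by simp
qed

lemma two_le_pow: "(a::nat) \<ge> 1 \<Longrightarrow> 2 * a \<le> 2 ^ a"
proof (induction a rule: nat_induct_at_least)
  case base then show ?case by simp
next
  case (Suc n) then show ?case by simp
qed


lemma stepB:
  assumes m: "m \<ge> 3" and e1: "tet 2 (m - 1) \<le> e" and e2: "e < 2 * tet 2 (m - 1)"
    and h: "H e \<ge> m - 1"
  shows "e = tet 2 (m - 1)"
proof -
  define b where "b = tet 2 (m - 2)"
  have mm: "m - 1 = Suc (m - 2)" using m by simp
  have al: "tet 2 (m - 1) = 2 ^ b" unfolding b_def mm by simp
  have b2: "b \<ge> 2" unfolding b_def using tet_ge m by simp
  from H_ge_Suc[of "m - 2" e] h mm obtain q where e0: "e > 1" and q: "q \<in> prime_factors e"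
    and hq: "H (multiplicity q e) \<ge> m - 2" by auto
  have pq: "prime q" using q by auto
  have v: "b \<le> multiplicity q e" using H_bound[OF hq] b_def m by simp
  have "q ^ b \<le> q ^ multiplicity q e" using v prime_gt_0_nat[OF pq] by (intro power_increasing) auto
  also have "\<dots> \<le> e" using e0 by (intro dvd_imp_le multiplicity_dvd) auto
  finally have qb: "q ^ b < 2 * 2 ^ b" using e2 al by simp
  have "q < 3"
  proof (rule ccontr)
    assume "\<not> q < 3"
    hence "3 ^ b \<le> q ^ b" by (intro power_mono) auto
    thus False using qb pow3[OF b2] by simp
  qed
  hence q2: "q = 2" using prime_ge_2_nat[OF pq] by simp
  have "(2::nat) ^ multiplicity 2 e dvd e" by (rule multiplicity_dvd)
  moreover have "(2::nat) ^ b dvd 2 ^ multiplicity 2 e" using v q2 by (intro le_imp_power_dvd) simp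
  ultimately have "2 ^ b dvd e" by (rule dvd_trans[rotated])
  then obtain c where c: "e = 2 ^ b * c" by blast
  have "c \<ge> 1" using c e1 al by (cases c) auto
  moreover have "c < 2" using c e2 al by simp
  ultimately have "c = 1" by simp
  thus ?thesis using c al by simp
qed

lemma H_le_m:
  assumes m: "m \<ge> 3" and n: "n < 3 ^ tet 2 (m - 1)"
  shows "H n \<le> m"
proof (rule ccontr)
  define al where "al = tet 2 (m - 1)"
  assume "\<not> H n \<le> m"
  hence "H n \<ge> Suc m" by simp
  hence "n \<ge> tet 2 (Suc m)" by (rule H_bound0)
  moreover obtain k where k: "m = Suc k" using m by (cases m) auto
  moreover have "tet 2 (Suc m) = 2 ^ (2 ^ al)" unfolding al_def k by simp
  moreover have "(3::nat) ^ al \<le> 4 ^ al" by (intro power_mono) auto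
  moreover have "(4::nat) ^ al = 2 ^ (2 * al)" by (simp add: power_mult)
  moreover have "(2::nat) ^ (2 * al) \<le> 2 ^ (2 ^ al)"
    using two_le_pow[of al] tet_pos unfolding al_def by (intro power_increasing) auto
  moreover have "n < 3 ^ al" using n al_def by simp
  ultimately show False by linarith
qed

lemma stepC:
  assumes m: "m \<ge> 3" and n: "n < 3 ^ tet 2 (m - 1)" and h: "H n = m"
  shows "multiplicity 2 n = tet 2 (m - 1)"
proof -
  define al where "al = tet 2 (m - 1)"
  have mm: "m = Suc (m - 1)" using m by simp
  have hs: "H n \<ge> Suc (m - 1)" using h mm by simp
  from H_ge_Suc[OF hs] obtain p where n1: "n > 1" and p: "p \<in> prime_factors n"
    and hp: "H (multiplicity p n) \<ge> m - 1" by blast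
  have pp: "prime p" using p by auto
  define v where "v = multiplicity p n"
  have v: "al \<le> v" using H_bound[OF hp] al_def v_def m by simp
  have pv: "p ^ v \<le> n" unfolding v_def using n1 by (intro dvd_imp_le multiplicity_dvd) auto
  have "p ^ al \<le> p ^ v" using v prime_gt_0_nat[OF pp] by (intro power_increasing) auto
  hence "p ^ al < 3 ^ al" using pv n al_def by simp
  hence "p < 3" by (rule power_less_imp_less_base) simp
  hence p2: "p = 2" using prime_ge_2_nat[OF pp] by simp
  have "(2::nat) ^ v < 3 ^ al" using pv n p2 al_def by simp
  also have "(3::nat) ^ al < 4 ^ al" using tet_pos[of "m - 1"] al_def by (intro power_strict_mono) auto
  also have "(4::nat) ^ al = 2 ^ (2 * al)" by (simp add: power_mult)
  finally have "v < 2 * al" by (rule power_less_imp_less_exp[rotated]) simp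
  hence "v = al" using stepB[OF m] v hp al_def v_def by simp
  thus ?thesis using p2 v_def al_def by simp
qed

theorem lemma3:
  fixes m n :: nat
  assumes "m \<ge> 3"
  assumes "n < 3 ^ tet 2 (m - 1)"
  shows "(H n = m \<longleftrightarrow>
           (\<exists>a. n = 2 ^ tet 2 (m - 1) * a \<and> odd a \<and> real a < (3/2) ^ tet 2 (m - 1)))
       \<and> ((\<not> (\<exists>a. n = 2 ^ tet 2 (m - 1) * a \<and> odd a)) \<longrightarrow> H n \<le> m - 1)"
proof -
  define al where "al = tet 2 (m - 1)"
  have fwd: "\<exists>a. n = 2 ^ al * a \<and> odd a" if h: "H n = m"
  proof -
    have mu: "multiplicity 2 n = al" using stepC[OF assms h] al_def by simp
    have n0: "n \<noteq> 0"
    proof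
      assume "n = 0" hence "H n = 0" by (simp add: H_small)
      with h assms show False by simp
    qed
    have "2 ^ multiplicity 2 n dvd n" by (rule multiplicity_dvd)
    hence "2 ^ al dvd n" using mu by simp
    then obtain a where a: "n = 2 ^ al * a" by blast
    have "odd a"
    proof
      assume "even a"
      then obtain c where "a = 2 * c" by blast
      hence "2 ^ Suc al dvd n" using a by simp
      hence "Suc al \<le> multiplicity 2 n" using n0 by (intro multiplicity_geI) auto
      thus False using mu by simp
    qed
    thus ?thesis using a by blast
  qed
  have bwd: "H n = m" if a: "n = 2 ^ al * a" and oa: "odd a" for a
  proof -
    have a0: "a \<noteq> 0"
    proof
      assume "a = 0" with oa show False by simp
    qed
    have mu: "multiplicity 2 n = al"
      using a a0 by (simp add: prime_elem_multiplicity_mult_distrib multiplicity_prime_power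
          not_dvd_imp_multiplicity_0 oa)
    have alp: "al \<ge> 1" using tet_pos al_def by simp
    have n1: "n > 1"
    proof -
      have "(2::nat) ^ 1 \<le> 2 ^ al" using alp by (intro power_increasing) auto
      moreover have "a \<ge> 1" using a0 by simp
      ultimately have "2 ^ 1 * 1 \<le> 2 ^ al * a" by (rule mult_le_mono)
      thus ?thesis using a by simp
    qed
    have "(2::nat) dvd 2 ^ al" using alp by (intro dvd_power) auto
    hence "2 dvd n" using a by simp
    hence "2 \<in> prime_factors n" using n1 by (simp add: in_prime_factors_iff)
    hence "H n \<ge> 1 + H (multiplicity 2 n)" by (rule H_ge_factor[OF n1])
    hence "H n \<ge> 1 + H al" using mu by simp
    moreover have "H al = m - 1" using H_tet al_def by simp
    ultimately have "H n \<ge> m" using assms by simp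
    thus ?thesis using H_le_m[OF assms] by simp
  qed
  have rb: "real a < (3/2) ^ al \<longleftrightarrow> True" if "n = 2 ^ al * a" for a
  proof -
    have "real n < real (3 ^ al)" using assms(2) al_def by (simp only: of_nat_less_iff)
    hence "real n < 3 ^ al" by simp
    hence "2 ^ al * real a < 3 ^ al" using that by simp
    hence "real a < 3 ^ al / 2 ^ al" by (simp add: field_simps)
    thus ?thesis by (simp add: power_divide)
  qed
  show ?thesis unfolding al_def[symmetric]
  proof (intro conjI impI)
    show "H n = m \<longleftrightarrow> (\<exists>a. n = 2 ^ al * a \<and> odd a \<and> real a < (3/2) ^ al)"
      using fwd bwd rb by blast
  next
    assume "\<not> (\<exists>a. n = 2 ^ al * a \<and> odd a)"
    hence "H n \<noteq> m" using fwd by blast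
    thus "H n \<le> m - 1" using H_le_m[OF assms] by simp
  qed
qed

end
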